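(* Let $\mathcal S=(\mathcal M,X,\bot)$ be an accessible concurrent system. Then $\mathcal S$ is irreducible if and only if $\mathcal S$ has the spectral property, i.e. for every letter $a$ of the base alphabet $\Sigma$ of $\mathcal M$, the characteristic root $r^a$ of the concurrent system $(\mathcal M^a,X,\bot)$ satisfies $r^a>r$, where $r$ is the characteristic root of $\mathcal S$.
   Context: A trace monoid $\mathcal M=\mathcal M(\Sigma,I)$ is the monoid presented by $\langle\Sigma\mid ab=ba \text{ for all }(a,b)\in I\rangle$, where $\Sigma$ is a finite alphabet and $I\subseteq\Sigma\times\Sigma$ is irreflexive and symmetric; its elements are called traces, $\varepsilon$ is the unit, and $|x|$ is the length of a trace $x$. Let $D=(\Sigma\times\Sigma)\setminus I$; $\mathcal M$ is irreducible if the graph $(\Sigma,D)$ is connected. For $a\in\Sigma$, $\mathcal M^a=\langle\Sigma\setminus\{a\}\rangle$ is the submonoid generated by $\Sigma\setminus\{a\}$ (traces with no occurrence of $a$). A concurrent system is a triple $(\mathcal M,X,\bot)$ where $X$ is a finite set of states, $\bot\notin X$, and $\mathcal M$ acts on the right on $X\cup\{\bot\}$ (so $\alpha\cdot\varepsilon=\alpha$, $(\alpha\cdot x)\cdot y=\alpha\cdot(xy)$) with $\bot\cdot x=\bot$ for all $x$. A trace $x$ is an execution from $\alpha\in X$ if $\alpha\cdot x\neq\bot$. The system is accessible if for all $\alpha,\beta\in X$ there is $x$ with $\alpha\cdot x=\beta$; alive if for every $\alpha\in X$ and every $a\in\Sigma$ there is $x\in\mathcal M$ containing at least one occurrence of $a$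 with $\alpha\cdot x\neq\bot$; irreducible if it is accessible, alive, and $\mathcal M$ is irreducible. For $\alpha,\beta\in X$, let $\mathcal M_{\alpha,\beta}(n)=\{x\in\mathcal M:\ |x|=n,\ \alpha\cdot x=\beta\}$, $G_{\alpha,\beta}(z)=\sum_{n\ge0}\#\mathcal M_{\alpha,\beta}(n)z^n$ with radius of convergence $r_{\alpha,\beta}\in(0,+\infty]$. The characteristic root of the system is $r=\min_{\alpha,\beta\in X}r_{\alpha,\beta}$ (possibly $+\infty$). For $a\in\Sigma$, $(\mathcal M^a,X,\bot)$ is the concurrent system obtained by restricting the action to $\mathcal M^a$. *)

theory Defs
  imports "HOL-Analysis.Analysis"
begin

(* Traces over the finite alphabet 'a are represented as words modulo the
   trace equivalence generated by commuting adjacent independent letters. *)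

definition swap_step :: "('a \<times> 'a) set \<Rightarrow> ('a list \<times> 'a list) set" where
  "swap_step I = {(u @ [a, b] @ v, u @ [b, a] @ v) | u v a b. (a, b) \<in> I}"

definition trace_eq :: "('a \<times> 'a) set \<Rightarrow> ('a list \<times> 'a list) set" where
  "trace_eq I = (swap_step I \<union> (swap_step I)\<inverse>)\<^sup>*"

(* Right action of words on states; None plays the role of the sink \<bottom>. *)
fun run :: "('s \<Rightarrow> 'a \<Rightarrow> 's option) \<Rightarrow> 's \<Rightarrow> 'a list \<Rightarrow> 's option" where
  "run \<delta> \<alpha> [] = Some \<alpha>"
| "run \<delta> \<alpha> (a # w) = (case \<delta> \<alpha> a of None \<Rightarrow> None | Some \<beta> \<Rightarrow> run \<delta> \<beta> w)"

(* The letter action defines an action of the trace monoid M(Sigma,I). *)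
definition concurrent_system :: "('a \<times> 'a) set \<Rightarrow> ('s \<Rightarrow> 'a \<Rightarrow> 's option) \<Rightarrow> bool" where
  "concurrent_system I \<delta> \<longleftrightarrow> irrefl I \<and> sym I \<and>
     (\<forall>\<alpha> a b. (a, b) \<in> I \<longrightarrow> run \<delta> \<alpha> [a, b] = run \<delta> \<alpha> [b, a])"

definition traces_between ::
  "('a \<times> 'a) set \<Rightarrow> ('s \<Rightarrow> 'a \<Rightarrow> 's option) \<Rightarrow> 'a set \<Rightarrow> 's \<Rightarrow> 's \<Rightarrow> nat \<Rightarrow> 'a list set set" where
  "traces_between I \<delta> A \<alpha> \<beta> n =
     {w. set w \<subseteq> A \<and> length w = n \<and> run \<delta> \<alpha> w = Some \<beta>} // trace_eq I"

definition root_between ::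
  "('a \<times> 'a) set \<Rightarrow> ('s \<Rightarrow> 'a \<Rightarrow> 's option) \<Rightarrow> 'a set \<Rightarrow> 's \<Rightarrow> 's \<Rightarrow> ereal" where
  "root_between I \<delta> A \<alpha> \<beta> = conv_radius (\<lambda>n. real (card (traces_between I \<delta> A \<alpha> \<beta> n)))"

definition char_root ::
  "('a \<times> 'a) set \<Rightarrow> ('s::finite \<Rightarrow> 'a \<Rightarrow> 's option) \<Rightarrow> 'a set \<Rightarrow> ereal" where
  "char_root I \<delta> A = Min {root_between I \<delta> A \<alpha> \<beta> | \<alpha> \<beta>. True}"

definition accessible :: "('s \<Rightarrow> 'a \<Rightarrow> 's option) \<Rightarrow> bool" where
  "accessible \<delta> \<longleftrightarrow> (\<forall>\<alpha> \<beta>. \<exists>w. run \<delta> \<alpha> w = Some \<beta>)"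

definition alive :: "('s \<Rightarrow> 'a \<Rightarrow> 's option) \<Rightarrow> bool" where
  "alive \<delta> \<longleftrightarrow> (\<forall>\<alpha> a. \<exists>w. a \<in> set w \<and> run \<delta> \<alpha> w \<noteq> None)"

(* dependence graph (Sigma, D), D = complement of I, is connected *)
definition irreducible_monoid :: "('a \<times> 'a) set \<Rightarrow> bool" where
  "irreducible_monoid I \<longleftrightarrow> (\<forall>a b. (a, b) \<in> (- I)\<^sup>*)"

definition irreducible_system :: "('a \<times> 'a) set \<Rightarrow> ('s \<Rightarrow> 'a \<Rightarrow> 's option) \<Rightarrow> bool" where
  "irreducible_system I \<delta> \<longleftrightarrow> accessible \<delta> \<and> alive \<delta> \<and> irreducible_monoid I"

definition spectral_property :: "('a \<times> 'a) set \<Rightarrow> ('s::finite \<Rightarrow> 'a \<Rightarrow> 's option) \<Rightarrow> bool" where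
  "spectral_property I \<delta> \<longleftrightarrow>
     (\<forall>a. char_root I \<delta> (UNIV - {a}) > char_root I \<delta> UNIV)"

end

theory Submission
  imports Defs
begin

lemma swap_stepI: "(a,b) \<in> I \<Longrightarrow> (u @ [a,b] @ v, u @ [b,a] @ v) \<in> swap_step I"
  unfolding swap_step_def by blast

lemma teq_refl[simp]: "(w,w) \<in> trace_eq I" by (simp add: trace_eq_def)

lemma teq_sym: "(w,w') \<in> trace_eq I \<Longrightarrow> (w',w) \<in> trace_eq I"
proof -
  have "sym (swap_step I \<union> (swap_step I)\<inverse>)" by (auto simp: sym_def)
  hence "sym (trace_eq I)" unfolding trace_eq_def by (rule sym_rtrancl)
  thus "(w,w') \<in> trace_eq I \<Longrightarrow> (w',w) \<in> trace_eq I" by (auto dest: symD)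
qed

lemma teq_trans: "(u,v) \<in> trace_eq I \<Longrightarrow> (v,w) \<in> trace_eq I \<Longrightarrow> (u,w) \<in> trace_eq I"
  unfolding trace_eq_def by (rule rtrancl_trans)

lemma equiv_teq: "equiv UNIV (trace_eq I)"
  by (rule equivI) (auto simp: refl_on_def sym_def trans_def intro: teq_sym teq_trans)

lemma swap_ctx: "(w,w') \<in> swap_step I \<Longrightarrow> (u@w@v, u@w'@v) \<in> swap_step I"
proof -
  assume "(w,w') \<in> swap_step I"
  then obtain p q a b where "w = p @ [a,b] @ q" "w' = p @ [b,a] @ q" "(a,b) \<in> I"
    unfolding swap_step_def by blast
  thus ?thesis using swap_stepI[of a b I "u@p" "q@v"] by simp
qed

lemma teq_ctx: "(w,w') \<in> trace_eq I \<Longrightarrow> (u@w@v, u@w'@v) \<in> trace_eq I"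
  unfolding trace_eq_def
proof (induction rule: rtrancl_induct)
  case base then show ?case by simp
next
  case (step y z)
  hence "(u@y@v, u@z@v) \<in> swap_step I \<union> (swap_step I)\<inverse>"
    using swap_ctx by blast
  with step.IH show ?case by (rule rtrancl_into_rtrancl)
qed

lemma teq_append: "(w,w') \<in> trace_eq I \<Longrightarrow> (v,v') \<in> trace_eq I \<Longrightarrow> (w@v, w'@v') \<in> trace_eq I"
  using teq_ctx[of w w' I "[]" v] teq_ctx[of v v' I w' "[]"] by (auto intro: teq_trans)

lemma teq_Cons: "(w,w') \<in> trace_eq I \<Longrightarrow> (a#w, a#w') \<in> trace_eq I"
  using teq_ctx[of w w' I "[a]" "[]"] by simp

definition proj :: "'a \<Rightarrow> 'a \<Rightarrow> 'a list \<Rightarrow> 'a list" where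
  "proj b c w = filter (\<lambda>x. x = b \<or> x = c) w"

lemma proj_simps[simp]: "proj b c [] = []" "proj b c (w@v) = proj b c w @ proj b c v"
  "proj b c (x#w) = (if x = b \<or> x = c then x # proj b c w else proj b c w)"
  by (auto simp: proj_def)

lemma swap_proj:
  assumes "irrefl I" "sym I" "(b,c) \<notin> I" "(w,w') \<in> swap_step I"
  shows "proj b c w = proj b c w'"
proof -
  from assms(4) obtain p q x y where e: "w = p @ [x,y] @ q" "w' = p @ [y,x] @ q" "(x,y) \<in> I"
    unfolding swap_step_def by blast
  have "x \<noteq> y" using e(3) assms(1) by (auto simp: irrefl_def)
  have "\<not> ((x = b \<or> x = c) \<and> (y = b \<or> y = c))"
    using e(3) assms(2,3) \<open>x \<noteq> y\<close> by (auto dest: symD)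
  thus ?thesis using e by auto
qed

lemma teq_proj:
  assumes "irrefl I" "sym I" "(b,c) \<notin> I" "(w,w') \<in> trace_eq I"
  shows "proj b c w = proj b c w'"
  using assms(4) unfolding trace_eq_def
proof (induction rule: rtrancl_induct)
  case (step y z)
  thus ?case using swap_proj[OF assms(1-3), of y z] swap_proj[OF assms(1-3), of z y] by auto
qed simp

lemma commute_past:
  assumes "\<forall>e \<in> set p. (e,b) \<in> I"
  shows "(p @ [b], b # p) \<in> trace_eq I"
  using assms
proof (induction p)
  case Nil then show ?case by simp
next
  case (Cons e p)
  hence "(e,b) \<in> I" by simp
  hence s: "([] @ [e,b] @ p, [] @ [b,e] @ p) \<in> swap_step I" by (rule swap_stepI)
  have "((e#p) @ [b], e # b # p) \<in> trace_eq I" using teq_Cons Cons by auto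
  moreover have "(e # b # p, b # e # p) \<in> trace_eq I"
    using s unfolding trace_eq_def by auto
  ultimately show ?case by (rule teq_trans)
qed

lemma proj_teq:
  assumes "irrefl I" "sym I" "\<forall>b c. (b,c) \<notin> I \<longrightarrow> proj b c w = proj b c w'"
  shows "(w,w') \<in> trace_eq I"
  using assms(3)
proof (induction w arbitrary: w')
  case Nil
  have "w' = []"
  proof (rule ccontr)
    assume "w' \<noteq> []"
    then obtain e where "e \<in> set w'" by (cases w') auto
    hence "proj e e w' \<noteq> []" by (auto simp: proj_def filter_empty_conv)
    moreover have "(e,e) \<notin> I" using assms(1) by (auto simp: irrefl_def)
    ultimately show False using Nil by auto
  qed
  thus ?case by simp
next
  case (Cons b v)
  have bI: "(b,b) \<notin> I" using assms(1) by (auto simp: irrefl_def)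
  have "b \<in> set w'"
  proof -
    have "proj b b w' = proj b b (b#v)" using Cons.prems bI by metis
    hence "b \<in> set (proj b b w')" by simp
    thus ?thesis by (auto simp: proj_def)
  qed
  then obtain p q where w': "w' = p @ b # q" and bp: "b \<notin> set p" by (metis split_list_first)
  have ind: "\<forall>e \<in> set p. (b,e) \<in> I"
  proof
    fix e assume e: "e \<in> set p"
    show "(b,e) \<in> I"
    proof (rule ccontr)
      assume "(b,e) \<notin> I"
      hence eq: "proj b e (b#v) = proj b e w'" using Cons.prems by blast
      have "proj b e p \<noteq> []" using e by (auto simp: proj_def filter_empty_conv)
      then obtain x r where pr: "proj b e p = x # r" by (cases "proj b e p") auto
      hence "x \<in> set (proj b e p)" by simp
      hence "x \<in> set p" "x = b \<or> x = e" by (auto simp: proj_def)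
      hence "x = e" "x \<noteq> b" using bp by auto
      have "proj b e w' = x # r @ proj b e (b # q)" using pr w' by simp
      moreover have "proj b e (b#v) = b # proj b e v" by simp
      ultimately show False using eq \<open>x \<noteq> b\<close> by simp
    qed
  qed
  have t1: "(w', b # p @ q) \<in> trace_eq I"
    using teq_append[OF commute_past[of p b I] teq_refl[of q]] ind assms(2) symD[OF assms(2)] w' by simp
  have "\<forall>c e. (c,e) \<notin> I \<longrightarrow> proj c e v = proj c e (p @ q)"
  proof (intro allI impI)
    fix c e assume ce: "(c,e) \<notin> I"
    have "proj c e (b#v) = proj c e w'" using Cons.prems ce by blast
    also have "\<dots> = proj c e (b # p @ q)" using teq_proj[OF assms(1,2) ce t1] .
    finally show "proj c e v = proj c e (p @ q)" by (auto split: if_splits)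
  qed
  hence "(v, p @ q) \<in> trace_eq I" using Cons.IH by blast
  hence "(b#v, b # p @ q) \<in> trace_eq I" by (rule teq_Cons)
  thus ?case using teq_sym[OF t1] by (rule teq_trans)
qed

lemma teq_iff_proj:
  assumes "irrefl I" "sym I"
  shows "(w,w') \<in> trace_eq I \<longleftrightarrow> (\<forall>b c. (b,c) \<notin> I \<longrightarrow> proj b c w = proj b c w')"
  using teq_proj[OF assms] proj_teq[OF assms] by blast

lemma teq_cancel_left:
  assumes "irrefl I" "sym I" "(u@x, u@y) \<in> trace_eq I"
  shows "(x,y) \<in> trace_eq I"
  using assms by (simp add: teq_iff_proj)

lemma swap_length_set:
  assumes "(w,w') \<in> swap_step I \<union> (swap_step I)\<inverse>"
  shows "length w = length w' \<and> set w = set w'"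
proof -
  from assms obtain p q a b where "(w = p @ [a,b] @ q \<and> w' = p @ [b,a] @ q) \<or> (w' = p @ [a,b] @ q \<and> w = p @ [b,a] @ q)"
    unfolding swap_step_def by blast
  thus ?thesis by (elim disjE conjE) auto
qed

lemma teq_length_set: "(w,w') \<in> trace_eq I \<Longrightarrow> length w = length w' \<and> set w = set w'"
  unfolding trace_eq_def
proof (induction rule: rtrancl_induct)
  case (step y z) then show ?case using swap_length_set[OF step(2)] by simp
qed simp

lemma teq_length: "(w,w') \<in> trace_eq I \<Longrightarrow> length w = length w'"
  using teq_length_set by blast

lemma teq_set: "(w,w') \<in> trace_eq I \<Longrightarrow> set w = set w'"
  using teq_length_set by blast

lemma run_append: "run \<delta> \<alpha> (u@v) = (case run \<delta> \<alpha> u of None \<Rightarrow> None | Some \<beta> \<Rightarrow> run \<delta> \<beta> v)"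
  by (induction u arbitrary: \<alpha>) (auto split: option.splits)

lemma run_None[simp]: "run \<delta> \<alpha> u = None \<Longrightarrow> run \<delta> \<alpha> (u@v) = None"
  by (simp add: run_append)

lemma run_Some: "run \<delta> \<alpha> u = Some \<beta> \<Longrightarrow> run \<delta> \<alpha> (u@v) = run \<delta> \<beta> v"
  by (simp add: run_append)

lemma teq_run:
  assumes "concurrent_system I \<delta>" "(w,w') \<in> trace_eq I"
  shows "run \<delta> \<alpha> w = run \<delta> \<alpha> w'"
  using assms(2) unfolding trace_eq_def
proof (induction rule: rtrancl_induct)
  case (step y z)
  have sw: "run \<delta> \<alpha> y = run \<delta> \<alpha> z" if "(y,z) \<in> swap_step I" for y z
  proof -
    from that obtain p q a b where e: "y = p @ [a,b] @ q" "z = p @ [b,a] @ q" "(a,b) \<in> I"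
      unfolding swap_step_def by blast
    have c: "run \<delta> \<gamma> [a,b] = run \<delta> \<gamma> [b,a]" for \<gamma>
      using assms(1) e(3) unfolding concurrent_system_def by blast
    show ?thesis using c unfolding e run_append[of _ _ p] run_append[of _ _ "[_,_]"]
      by (auto split: option.splits)
  qed
  from step show ?case using sw[of y z] sw[of z y] by auto
qed simp

fun nd :: "'a \<Rightarrow> 'a \<Rightarrow> nat \<Rightarrow> 'a list \<Rightarrow> nat" where
  "nd b d k [] = 0"
| "nd b d k (e # w) = (if e = b then (if k = 0 then 0 else nd b d (k - 1) w)
      else if e = d then Suc (nd b d k w) else nd b d k w)"

lemma nd_proj: "nd b d k (proj b d w) = nd b d k w"
  by (induction w arbitrary: k) auto

lemma nd_append: "b \<noteq> d \<Longrightarrow> nd b d (count_list x b + j) (x @ v) = count_list x d + nd b d j v"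
  by (induction x arbitrary: j) auto

lemma nd_mem: "b \<in> set u \<Longrightarrow> nd b d 0 (u @ y) = nd b d 0 u"
  by (induction u) auto

lemma unique_fact:
  assumes irr: "irrefl I" and sy: "sym I" and im: "irreducible_monoid I"
    and u: "set u = UNIV" and ax: "a \<notin> set x" and ax': "a \<notin> set x'"
    and eq: "(x@u@y, x'@u@y') \<in> trace_eq I"
  shows "(x,x') \<in> trace_eq I \<and> (y,y') \<in> trace_eq I"
proof -
  have P: "proj b c (x@u@y) = proj b c (x'@u@y')" if "(b,c) \<notin> I" for b c
    using teq_proj[OF irr sy that eq] .
  have cnt: "count_list x b = count_list x' b" for b
  proof -
    have "(a,b) \<in> (- I)\<^sup>*" using im unfolding irreducible_monoid_def by blast
    thus ?thesis
    proof (induction rule: rtrancl_induct)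
      case base
      then show ?case using ax ax' by (simp add: count_list_0_iff)
    next
      case (step b d)
      show ?case
      proof (cases "b = d")
        case True then show ?thesis using step by simp
      next
        case False
        have bd: "(b,d) \<notin> I" using step(2) by simp
        have bu: "b \<in> set u" using u by simp
        have "nd b d (count_list x b) (x@u@y) = count_list x d + nd b d 0 u"
          using nd_append[OF False, of x 0 "u@y"] nd_mem[OF bu] by simp
        moreover have "nd b d (count_list x' b) (x'@u@y') = count_list x' d + nd b d 0 u"
          using nd_append[OF False, of x' 0 "u@y'"] nd_mem[OF bu] by simp
        moreover have "nd b d (count_list x b) (x@u@y) = nd b d (count_list x b) (x'@u@y')"
          using P[OF bd] nd_proj[of b d _ "x@u@y"] nd_proj[of b d _ "x'@u@y'"] by metis
        ultimately show ?thesis using step.IH by simp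
      qed
    qed
  qed
  have ms: "mset x = mset x'" by (rule multiset_eqI) (simp add: count_mset cnt)
  have "proj b c x = proj b c x' \<and> proj b c y = proj b c y'" if bc: "(b,c) \<notin> I" for b c
  proof -
    have "length (proj b c x) = length (proj b c x')"
      using ms unfolding proj_def by (metis mset_filter size_mset)
    moreover have "proj b c x @ proj b c (u@y) = proj b c x' @ proj b c (u@y')"
      using P[OF bc] by simp
    ultimately have "proj b c x = proj b c x'" "proj b c (u@y) = proj b c (u@y')"
      by (auto simp: append_eq_append_conv)
    thus ?thesis by simp
  qed
  thus ?thesis using proj_teq[OF irr sy] by blast
qed

lemma teq_filter_split:
  assumes sy: "sym I" and AB: "\<forall>b c. b \<in> A \<longrightarrow> c \<notin> A \<longrightarrow> (b,c) \<in> I"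
  shows "(w, filter (\<lambda>x. x \<in> A) w @ filter (\<lambda>x. x \<notin> A) w) \<in> trace_eq I"
proof (induction w)
  case Nil then show ?case by simp
next
  case (Cons x w)
  let ?p = "filter (\<lambda>x. x \<in> A) w" and ?q = "filter (\<lambda>x. x \<notin> A) w"
  show ?case
  proof (cases "x \<in> A")
    case True then show ?thesis using teq_Cons[OF Cons.IH] by simp
  next
    case False
    have "\<forall>e \<in> set ?p. (e,x) \<in> I" using AB False by auto
    hence "(?p @ [x], x # ?p) \<in> trace_eq I" by (rule commute_past)
    hence "(x # ?p @ ?q, ?p @ x # ?q) \<in> trace_eq I"
      using teq_append[OF teq_sym teq_refl[of ?q]] by fastforce
    hence "(x # w, ?p @ x # ?q) \<in> trace_eq I"
      using teq_trans[OF teq_Cons[OF Cons.IH]] by blast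
    then show ?thesis using False by simp
  qed
qed

lemma connector:
  assumes acc: "accessible \<delta>" and al: "alive \<delta>" and fin: "finite L"
  shows "\<exists>u. L \<subseteq> set u \<and> run \<delta> \<beta> u = Some \<alpha>"
  using fin
proof (induction L arbitrary: \<beta>)
  case empty
  then show ?case using acc unfolding accessible_def by blast
next
  case (insert c L)
  obtain w where w: "c \<in> set w" "run \<delta> \<beta> w \<noteq> None" using al unfolding alive_def by blast
  then obtain \<gamma> where g: "run \<delta> \<beta> w = Some \<gamma>" by blast
  obtain v where v: "L \<subseteq> set v" "run \<delta> \<gamma> v = Some \<alpha>" using insert.IH by blast
  show ?case using w g v run_Some[OF g, of v] by (intro exI[of _ "w@v"]) auto
qed

definition tS where
  "tS \<delta> A \<alpha> \<beta> n = {w. set w \<subseteq> A \<and> length w = n \<and> run \<delta> \<alpha> w = Some \<beta>}"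

abbreviation cls where "cls I w \<equiv> trace_eq I `` {w}"

lemma tb_eq: "traces_between I \<delta> A \<alpha> \<beta> n = cls I ` tS \<delta> A \<alpha> \<beta> n"
  by (auto simp: traces_between_def tS_def quotient_def)

lemma finite_tS: "finite (tS (\<delta>::'s \<Rightarrow> 'a::finite \<Rightarrow> 's option) A \<alpha> \<beta> n)"
proof -
  have "tS \<delta> A \<alpha> \<beta> n \<subseteq> {w. set w \<subseteq> UNIV \<and> length w = n}" by (auto simp: tS_def)
  thus ?thesis using finite_lists_length_eq[of "UNIV :: 'a set" n] finite_subset by auto
qed

lemma finite_tb: "finite (traces_between I (\<delta>::'s \<Rightarrow> 'a::finite \<Rightarrow> 's option) A \<alpha> \<beta> n)"
  unfolding tb_eq by (intro finite_imageI finite_tS)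

lemma cls_eq_iff: "cls I w = cls I w' \<longleftrightarrow> (w,w') \<in> trace_eq I"
  using equiv_class_eq_iff[OF equiv_teq] by blast

definition rep :: "'a list set \<Rightarrow> 'a list" where "rep X = (SOME w. w \<in> X)"

lemma rep_cls: "(w, rep (cls I w)) \<in> trace_eq I"
proof -
  have "w \<in> cls I w" by simp
  hence "rep (cls I w) \<in> cls I w" unfolding rep_def by (rule someI)
  thus ?thesis by simp
qed

lemma teq_tS:
  assumes cs: "concurrent_system I \<delta>" and "(w,w') \<in> trace_eq I" "w \<in> tS \<delta> A \<alpha> \<beta> n"
  shows "w' \<in> tS \<delta> A \<alpha> \<beta> n"
  using assms teq_length[OF assms(2)] teq_set[OF assms(2)] teq_run[OF cs assms(2)]
  by (auto simp: tS_def)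

lemma rep_props:
  assumes cs: "concurrent_system I \<delta>" and X: "X \<in> traces_between I \<delta> A \<alpha> \<beta> n"
  shows "rep X \<in> tS \<delta> A \<alpha> \<beta> n" "X = cls I (rep X)"
proof -
  from X obtain w where w: "w \<in> tS \<delta> A \<alpha> \<beta> n" "X = cls I w" unfolding tb_eq by blast
  have r: "(w, rep X) \<in> trace_eq I" using rep_cls w(2) by blast
  show "rep X \<in> tS \<delta> A \<alpha> \<beta> n" using teq_tS[OF cs r w(1)] .
  show "X = cls I (rep X)" using r w(2) cls_eq_iff by metis
qed

lemma card_le_cls:
  assumes "finite (cls I ` S')" "\<forall>d\<in>D. f d \<in> S'"
    "\<forall>d\<in>D. \<forall>d'\<in>D. (f d, f d') \<in> trace_eq I \<longrightarrow> d = d'"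
  shows "card D \<le> card (cls I ` S')"
proof (rule card_inj_on_le[of "\<lambda>d. cls I (f d)"])
  show "inj_on (\<lambda>d. cls I (f d)) D" using assms(3) cls_eq_iff unfolding inj_on_def by metis
  show "(\<lambda>d. cls I (f d)) ` D \<subseteq> cls I ` S'" using assms(2) by blast
qed fact

lemma tb_mono: "A \<subseteq> A' \<Longrightarrow> traces_between I \<delta> A \<alpha> \<beta> n \<subseteq> traces_between I \<delta> A' \<alpha> \<beta> n"
  unfolding tb_eq tS_def by blast

lemma card_tb_mono: "A \<subseteq> A' \<Longrightarrow> card (traces_between I (\<delta>::'s \<Rightarrow> 'a::finite \<Rightarrow> 's option) A \<alpha> \<beta> n)
   \<le> card (traces_between I \<delta> A' \<alpha> \<beta> n)"
  by (intro card_mono finite_tb tb_mono)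

lemma C2:
  assumes cs: "concurrent_system I (\<delta>::'s \<Rightarrow> 'a::finite \<Rightarrow> 's option)"
    and hyp: "\<forall>w. run \<delta> \<alpha> w \<noteq> None \<longrightarrow> a \<notin> set w"
    and u: "run \<delta> \<alpha> u = Some \<gamma>"
  shows "card (traces_between I \<delta> UNIV \<gamma> \<beta> n) \<le> card (traces_between I \<delta> (UNIV - {a}) \<alpha> \<beta> (n + length u))"
proof -
  have irr: "irrefl I" and sy: "sym I" using cs by (auto simp: concurrent_system_def)
  show ?thesis unfolding tb_eq[of I \<delta> "UNIV - {a}"]
  proof (rule card_le_cls[where f = "\<lambda>X. u @ rep X"])
    show "finite (cls I ` tS \<delta> (UNIV - {a}) \<alpha> \<beta> (n + length u))" by (intro finite_imageI finite_tS)
    show "\<forall>d\<in>traces_between I \<delta> UNIV \<gamma> \<beta> n. u @ rep d \<in> tS \<delta> (UNIV - {a}) \<alpha> \<beta> (n + length u)"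
    proof
      fix X assume X: "X \<in> traces_between I \<delta> UNIV \<gamma> \<beta> n"
      have r: "rep X \<in> tS \<delta> UNIV \<gamma> \<beta> n" using rep_props[OF cs X] by blast
      hence run: "run \<delta> \<alpha> (u @ rep X) = Some \<beta>" using run_Some[OF u] by (simp add: tS_def)
      hence "a \<notin> set (u @ rep X)" using hyp by auto
      thus "u @ rep X \<in> tS \<delta> (UNIV - {a}) \<alpha> \<beta> (n + length u)" using r run by (auto simp: tS_def)
    qed
    show "\<forall>d\<in>traces_between I \<delta> UNIV \<gamma> \<beta> n. \<forall>d'\<in>traces_between I \<delta> UNIV \<gamma> \<beta> n.
        (u @ rep d, u @ rep d') \<in> trace_eq I \<longrightarrow> d = d'"
      using teq_cancel_left[OF irr sy] rep_props(2)[OF cs] cls_eq_iff by metis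
  qed
qed

lemma C3:
  assumes cs: "concurrent_system I (\<delta>::'s::finite \<Rightarrow> 'a::finite \<Rightarrow> 's option)"
    and AB: "\<forall>b c. b \<in> A \<longrightarrow> c \<notin> A \<longrightarrow> (b,c) \<in> I"
  shows "card (traces_between I \<delta> UNIV \<alpha> \<beta> n) \<le>
     (\<Sum>p\<in>UNIV \<times> {..n}. card (traces_between I \<delta> A \<alpha> (fst p) (snd p)) *
                           card (traces_between I \<delta> (- A) (fst p) \<beta> (n - snd p)))"
proof -
  have sy: "sym I" using cs by (auto simp: concurrent_system_def)
  define D where "D = (SIGMA p : UNIV \<times> {..n}. traces_between I \<delta> A \<alpha> (fst p) (snd p) \<times>
                           traces_between I \<delta> (- A) (fst p) \<beta> (n - snd p))"
  have finD: "finite D" unfolding D_def by (intro finite_SigmaI finite_cartesian_product finite_tb) auto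
  have cardD: "card D = (\<Sum>p\<in>UNIV \<times> {..n}. card (traces_between I \<delta> A \<alpha> (fst p) (snd p)) *
                           card (traces_between I \<delta> (- A) (fst p) \<beta> (n - snd p)))"
    unfolding D_def by (subst card_SigmaI) (auto simp: card_cartesian_product intro!: finite_tb)
  define pa where "pa X = filter (\<lambda>x. x \<in> A) (rep X)" for X
  define qa where "qa X = filter (\<lambda>x. x \<notin> A) (rep X)" for X
  define g where "g X = ((the (run \<delta> \<alpha> (pa X)), length (pa X)), cls I (pa X), cls I (qa X))" for X
  have "card (traces_between I \<delta> UNIV \<alpha> \<beta> n) \<le> card D"
  proof (rule card_inj_on_le[of g])
    show "inj_on g (traces_between I \<delta> UNIV \<alpha> \<beta> n)"
    proof (rule inj_onI)
      fix X Y assume X: "X \<in> traces_between I \<delta> UNIV \<alpha> \<beta> n" and Y: "Y \<in> traces_between I \<delta> UNIV \<alpha> \<beta> n"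
        and e: "g X = g Y"
      hence "(pa X, pa Y) \<in> trace_eq I" "(qa X, qa Y) \<in> trace_eq I"
        unfolding g_def using cls_eq_iff by auto
      hence "(pa X @ qa X, pa Y @ qa Y) \<in> trace_eq I" by (rule teq_append)
      hence "(rep X, rep Y) \<in> trace_eq I"
        using teq_filter_split[OF sy AB, of "rep X"] teq_filter_split[OF sy AB, of "rep Y"]
        unfolding pa_def qa_def by (meson teq_sym teq_trans)
      thus "X = Y" using rep_props(2)[OF cs X] rep_props(2)[OF cs Y] cls_eq_iff by metis
    qed
    show "g ` traces_between I \<delta> UNIV \<alpha> \<beta> n \<subseteq> D"
    proof
      fix Z assume "Z \<in> g ` traces_between I \<delta> UNIV \<alpha> \<beta> n"
      then obtain X where X: "X \<in> traces_between I \<delta> UNIV \<alpha> \<beta> n" and Z: "Z = g X" by blast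
      have r: "rep X \<in> tS \<delta> UNIV \<alpha> \<beta> n" using rep_props[OF cs X] by blast
      have t: "(rep X, pa X @ qa X) \<in> trace_eq I"
        unfolding pa_def qa_def by (rule teq_filter_split[OF sy AB])
      have run: "run \<delta> \<alpha> (pa X @ qa X) = Some \<beta>" using teq_run[OF cs t] r by (simp add: tS_def)
      then obtain \<gamma> where g: "run \<delta> \<alpha> (pa X) = Some \<gamma>"
        by (cases "run \<delta> \<alpha> (pa X)") auto
      have g2: "run \<delta> \<gamma> (qa X) = Some \<beta>" using run run_Some[OF g] by simp
      have len: "length (pa X) + length (qa X) = n"
        using r unfolding pa_def qa_def tS_def by (simp add: sum_length_filter_compl)
      have "pa X \<in> tS \<delta> A \<alpha> \<gamma> (length (pa X))" using g by (auto simp: tS_def pa_def)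
      moreover have "qa X \<in> tS \<delta> (- A) \<gamma> \<beta> (n - length (pa X))" using g2 len by (auto simp: tS_def qa_def)
      ultimately show "Z \<in> D" unfolding Z g_def D_def tb_eq using g len by auto
    qed
  qed fact
  thus ?thesis using cardD by simp
qed

lemma C4:
  assumes cs: "concurrent_system I (\<delta>::'s::finite \<Rightarrow> 'a::finite \<Rightarrow> 's option)"
    and im: "irreducible_monoid I" and uU: "set u = UNIV" and u: "run \<delta> \<beta> u = Some \<alpha>"
  shows "(\<Sum>i\<le>N. card (traces_between I \<delta> (UNIV - {a}) \<alpha> \<beta> i) * card (traces_between I \<delta> UNIV \<alpha> \<beta> (N - i)))
     \<le> card (traces_between I \<delta> UNIV \<alpha> \<beta> (N + length u))"
proof -
  have irr: "irrefl I" and sy: "sym I" using cs by (auto simp: concurrent_system_def)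
  define D where "D = (SIGMA i : {..N}. traces_between I \<delta> (UNIV - {a}) \<alpha> \<beta> i \<times>
                           traces_between I \<delta> UNIV \<alpha> \<beta> (N - i))"
  have cardD: "card D = (\<Sum>i\<le>N. card (traces_between I \<delta> (UNIV - {a}) \<alpha> \<beta> i) * card (traces_between I \<delta> UNIV \<alpha> \<beta> (N - i)))"
    unfolding D_def by (subst card_SigmaI) (auto simp: card_cartesian_product intro!: finite_tb)
  have "card D \<le> card (traces_between I \<delta> UNIV \<alpha> \<beta> (N + length u))"
    unfolding tb_eq[of I \<delta> UNIV _ _ "N + length u"]
  proof (rule card_le_cls[where f = "\<lambda>(i,X,Y). rep X @ u @ rep Y"])
    show "finite (cls I ` tS \<delta> UNIV \<alpha> \<beta> (N + length u))" by (intro finite_imageI finite_tS)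
    show "\<forall>d\<in>D. (case d of (i, X, Y) \<Rightarrow> rep X @ u @ rep Y) \<in> tS \<delta> UNIV \<alpha> \<beta> (N + length u)"
    proof
      fix d assume "d \<in> D"
      then obtain i X Y where d: "d = (i,X,Y)" "i \<le> N" "X \<in> traces_between I \<delta> (UNIV - {a}) \<alpha> \<beta> i"
        "Y \<in> traces_between I \<delta> UNIV \<alpha> \<beta> (N - i)" unfolding D_def by auto
      have x: "rep X \<in> tS \<delta> (UNIV - {a}) \<alpha> \<beta> i" using rep_props[OF cs d(3)] by blast
      have y: "rep Y \<in> tS \<delta> UNIV \<alpha> \<beta> (N - i)" using rep_props[OF cs d(4)] by blast
      have "run \<delta> \<alpha> (rep X @ u @ rep Y) = Some \<beta>"
        using x y u by (simp add: tS_def run_Some)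
      thus "(case d of (i, X, Y) \<Rightarrow> rep X @ u @ rep Y) \<in> tS \<delta> UNIV \<alpha> \<beta> (N + length u)"
        using x y d(1,2) by (auto simp: tS_def)
    qed
    show "\<forall>d\<in>D. \<forall>d'\<in>D. ((case d of (i, X, Y) \<Rightarrow> rep X @ u @ rep Y), (case d' of (i, X, Y) \<Rightarrow> rep X @ u @ rep Y))
        \<in> trace_eq I \<longrightarrow> d = d'"
    proof (intro ballI impI)
      fix d d' assume "d \<in> D" "d' \<in> D"
      then obtain i X Y i' X' Y' where d: "d = (i,X,Y)" "X \<in> traces_between I \<delta> (UNIV - {a}) \<alpha> \<beta> i"
        "Y \<in> traces_between I \<delta> UNIV \<alpha> \<beta> (N - i)" and d': "d' = (i',X',Y')"
        "X' \<in> traces_between I \<delta> (UNIV - {a}) \<alpha> \<beta> i'"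
        "Y' \<in> traces_between I \<delta> UNIV \<alpha> \<beta> (N - i')" unfolding D_def by auto
      assume "((case d of (i, X, Y) \<Rightarrow> rep X @ u @ rep Y), (case d' of (i, X, Y) \<Rightarrow> rep X @ u @ rep Y))
        \<in> trace_eq I"
      hence e: "(rep X @ u @ rep Y, rep X' @ u @ rep Y') \<in> trace_eq I" using d d' by simp
      have x: "rep X \<in> tS \<delta> (UNIV - {a}) \<alpha> \<beta> i" using rep_props[OF cs d(2)] by blast
      have x': "rep X' \<in> tS \<delta> (UNIV - {a}) \<alpha> \<beta> i'" using rep_props[OF cs d'(2)] by blast
      have "(rep X, rep X') \<in> trace_eq I \<and> (rep Y, rep Y') \<in> trace_eq I"
        using unique_fact[OF irr sy im uU _ _ e, of a] x x' by (auto simp: tS_def)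
      moreover have "i = i'" using x x' calculation teq_length by (fastforce simp: tS_def)
      ultimately show "d = d'" using d d' rep_props(2)[OF cs] cls_eq_iff by metis
    qed
  qed
  thus ?thesis using cardD by simp
qed

lemma cr_mono:
  fixes c d :: "nat \<Rightarrow> real"
  assumes "\<And>n. 0 \<le> c n" "\<And>n. c n \<le> d n"
  shows "conv_radius d \<le> conv_radius c"
proof (rule conv_radius_geI_ex')
  fix r :: real assume r: "0 < r" "ereal r < conv_radius d"
  have s: "summable (\<lambda>n. d n * of_real r ^ n)" using r by (intro summable_in_conv_radius) simp
  show "summable (\<lambda>n. c n * of_real r ^ n)"
  proof (rule summable_comparison_test'[OF s])
    fix n show "norm (c n * of_real r ^ n) \<le> d n * of_real r ^ n"
      using assms[of n] r by (simp add: abs_mult mult_right_mono)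
  qed
qed

lemma cr_shift:
  fixes c d :: "nat \<Rightarrow> real"
  assumes "\<And>n. 0 \<le> c n" "\<And>n. c n \<le> d (n + k)"
  shows "conv_radius d \<le> conv_radius c"
  using cr_mono[of c "\<lambda>n. d (n+k)"] conv_radius_shift[of d k] assms by simp

lemma cr_sum:
  fixes f :: "'b \<Rightarrow> nat \<Rightarrow> real"
  assumes "finite S" "\<And>\<gamma>. \<gamma> \<in> S \<Longrightarrow> \<rho> \<le> conv_radius (f \<gamma>)"
  shows "\<rho> \<le> conv_radius (\<lambda>n. \<Sum>\<gamma>\<in>S. f \<gamma> n)"
  using assms
proof (induction S rule: finite_induct)
  case empty then show ?case by simp
next
  case (insert x F)
  have "\<rho> \<le> min (conv_radius (f x)) (conv_radius (\<lambda>n. \<Sum>\<gamma>\<in>F. f \<gamma> n))"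
    using insert by auto
  also have "\<dots> \<le> conv_radius (\<lambda>n. f x n + (\<Sum>\<gamma>\<in>F. f \<gamma> n))" by (rule conv_radius_add_ge)
  finally show ?case using insert by simp
qed

lemma root_set_eq: "{root_between I \<delta> A \<alpha> \<beta> | \<alpha> \<beta>. True} = (\<lambda>(\<alpha>,\<beta>). root_between I \<delta> A \<alpha> \<beta>) ` UNIV"
  by auto

lemma char_root_le: "char_root I \<delta> A \<le> root_between I \<delta> A \<alpha> \<beta>"
  unfolding char_root_def root_set_eq by (rule Min_le) auto

lemma char_root_attained: "\<exists>\<alpha> \<beta>. char_root I \<delta> A = root_between I \<delta> A \<alpha> \<beta>"
proof -
  have "char_root I \<delta> A \<in> (\<lambda>(\<alpha>,\<beta>). root_between I \<delta> A \<alpha> \<beta>) ` UNIV"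
    unfolding char_root_def root_set_eq by (rule Min_in) auto
  thus ?thesis by auto
qed

lemma char_root_geI: "(\<And>\<alpha> \<beta>. x \<le> root_between I \<delta> A \<alpha> \<beta>) \<Longrightarrow> x \<le> char_root I \<delta> A"
  using char_root_attained by metis

lemma spectral_alive:
  fixes I :: "('a::finite \<times> 'a) set" and \<delta> :: "'s::finite \<Rightarrow> 'a \<Rightarrow> 's option"
  assumes cs: "concurrent_system I \<delta>" and acc: "accessible \<delta>" and sp: "spectral_property I \<delta>"
  shows "alive \<delta>"
proof (rule ccontr)
  assume "\<not> alive \<delta>"
  then obtain \<alpha> a where hyp: "\<forall>w. run \<delta> \<alpha> w \<noteq> None \<longrightarrow> a \<notin> set w" unfolding alive_def by blast
  obtain \<gamma> \<beta> where r: "char_root I \<delta> UNIV = root_between I \<delta> UNIV \<gamma> \<beta>"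
    using char_root_attained by blast
  obtain u where u: "run \<delta> \<alpha> u = Some \<gamma>" using acc unfolding accessible_def by blast
  have "root_between I \<delta> (UNIV - {a}) \<alpha> \<beta> \<le> root_between I \<delta> UNIV \<gamma> \<beta>"
    unfolding root_between_def by (rule cr_shift[where k="length u"]) (auto simp: C2[OF cs hyp u])
  hence "char_root I \<delta> (UNIV - {a}) \<le> char_root I \<delta> UNIV"
    using char_root_le[of I \<delta> "UNIV - {a}" \<alpha> \<beta>] r by simp
  thus False using sp unfolding spectral_property_def by (meson not_le)
qed

lemma spectral_irr_monoid:
  fixes I :: "('a::finite \<times> 'a) set" and \<delta> :: "'s::finite \<Rightarrow> 'a \<Rightarrow> 's option"
  assumes cs: "concurrent_system I \<delta>" and sp: "spectral_property I \<delta>"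
  shows "irreducible_monoid I"
proof (rule ccontr)
  assume "\<not> irreducible_monoid I"
  then obtain b0 d0 where nr: "(b0,d0) \<notin> (- I)\<^sup>*" unfolding irreducible_monoid_def by blast
  define A where "A = {c. (b0,c) \<in> (- I)\<^sup>*}"
  have AB: "\<forall>b c. b \<in> A \<longrightarrow> c \<notin> A \<longrightarrow> (b,c) \<in> I"
  proof (intro allI impI)
    fix b c assume "b \<in> A" "c \<notin> A"
    show "(b,c) \<in> I"
    proof (rule ccontr)
      assume "(b,c) \<notin> I"
      hence "(b0,c) \<in> (- I)\<^sup>*" using \<open>b \<in> A\<close> unfolding A_def
        by (simp add: rtrancl_into_rtrancl)
      thus False using \<open>c \<notin> A\<close> unfolding A_def by simp
    qed
  qed
  have b0A: "b0 \<in> A" and d0A: "d0 \<notin> A" using nr unfolding A_def by auto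
  define \<rho> where "\<rho> = min (char_root I \<delta> (UNIV - {b0})) (char_root I \<delta> (UNIV - {d0}))"
  have "\<rho> \<le> root_between I \<delta> UNIV \<alpha> \<beta>" for \<alpha> \<beta>
  proof -
    define fA where "fA \<gamma> k = real (card (traces_between I \<delta> A \<alpha> \<gamma> k))" for \<gamma> k
    define fB where "fB \<gamma> k = real (card (traces_between I \<delta> (- A) \<gamma> \<beta> k))" for \<gamma> k
    define h where "h n = (\<Sum>\<gamma>\<in>UNIV. \<Sum>k\<le>n. fA \<gamma> k * fB \<gamma> (n - k))" for n
    have gh: "real (card (traces_between I \<delta> UNIV \<alpha> \<beta> n)) \<le> h n" for n
    proof -
      have "real (card (traces_between I \<delta> UNIV \<alpha> \<beta> n)) \<le>
         real (\<Sum>p\<in>UNIV \<times> {..n}. card (traces_between I \<delta> A \<alpha> (fst p) (snd p)) *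
                           card (traces_between I \<delta> (- A) (fst p) \<beta> (n - snd p)))"
        using C3[OF cs AB, of \<alpha> \<beta> n] by linarith
      also have "\<dots> = h n" unfolding h_def fA_def fB_def
        by (simp add: sum.cartesian_product case_prod_beta)
      finally show ?thesis .
    qed
    have "\<rho> \<le> conv_radius h" unfolding h_def
    proof (rule cr_sum)
      fix \<gamma> :: 's
      have "\<rho> \<le> char_root I \<delta> (UNIV - {d0})" unfolding \<rho>_def by simp
      also have "\<dots> \<le> root_between I \<delta> (UNIV - {d0}) \<alpha> \<gamma>" by (rule char_root_le)
      also have "\<dots> \<le> conv_radius (fA \<gamma>)" unfolding root_between_def fA_def
        by (rule cr_mono) (use d0A in \<open>auto intro!: card_tb_mono\<close>)
      finally have 1: "\<rho> \<le> conv_radius (fA \<gamma>)" .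
      have "\<rho> \<le> char_root I \<delta> (UNIV - {b0})" unfolding \<rho>_def by simp
      also have "\<dots> \<le> root_between I \<delta> (UNIV - {b0}) \<gamma> \<beta>" by (rule char_root_le)
      also have "\<dots> \<le> conv_radius (fB \<gamma>)" unfolding root_between_def fB_def
        by (rule cr_mono) (use b0A in \<open>auto intro!: card_tb_mono\<close>)
      finally have 2: "\<rho> \<le> conv_radius (fB \<gamma>)" .
      have "\<rho> \<le> min (conv_radius (fA \<gamma>)) (conv_radius (fB \<gamma>))" using 1 2 by simp
      also have "\<dots> \<le> conv_radius (\<lambda>n. \<Sum>k\<le>n. fA \<gamma> k * fB \<gamma> (n - k))" by (rule conv_radius_mult_ge)
      finally show "\<rho> \<le> conv_radius (\<lambda>n. \<Sum>k\<le>n. fA \<gamma> k * fB \<gamma> (n - k))" .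
    qed simp
    also have "\<dots> \<le> root_between I \<delta> UNIV \<alpha> \<beta>" unfolding root_between_def
      by (rule cr_mono) (auto simp: gh)
    finally show ?thesis .
  qed
  hence "\<rho> \<le> char_root I \<delta> UNIV" by (rule char_root_geI)
  moreover have "char_root I \<delta> UNIV < \<rho>" using sp unfolding spectral_property_def \<rho>_def by simp
  ultimately show False by simp
qed

lemma hcore:
  fixes c g :: "nat \<Rightarrow> real"
  assumes c0: "\<And>n. 0 \<le> c n" and cg: "\<And>n. c n \<le> g n"
    and conv: "\<And>N. (\<Sum>i\<le>N. c i * g (N - i)) \<le> g (N + m)"
    and z: "0 < z" and zc: "ereal z < conv_radius c"
    and big: "1 < z ^ m * (\<Sum>n. c n * z ^ n)"
  shows "conv_radius g \<le> ereal z"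
proof (rule ccontr)
  assume "\<not> conv_radius g \<le> ereal z"
  hence zg: "ereal z < conv_radius g" by simp
  have g0: "0 \<le> g n" for n using c0[of n] cg[of n] by linarith
  have sc: "summable (\<lambda>n. norm (c n * z ^ n))" using zc z by (intro abs_summable_in_conv_radius) simp
  have sg: "summable (\<lambda>n. norm (g n * z ^ n))" using zg z by (intro abs_summable_in_conv_radius) simp
  have sc': "summable (\<lambda>n. c n * z ^ n)" using sc z c0 by (simp add: abs_mult)
  have sg': "summable (\<lambda>n. g n * z ^ n)" using sg z g0 by (simp add: abs_mult)
  define F where "F = (\<Sum>n. c n * z ^ n)"
  define G where "G = (\<Sum>n. g n * z ^ n)"
  have cp: "(\<lambda>k. \<Sum>i\<le>k. (c i * z ^ i) * (g (k - i) * z ^ (k - i))) sums (F * G)"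
    unfolding F_def G_def by (rule Cauchy_product_sums[OF sc sg])
  have eqk: "(\<Sum>i\<le>k. (c i * z ^ i) * (g (k - i) * z ^ (k - i))) = (\<Sum>i\<le>k. c i * g (k - i)) * z ^ k" for k
    unfolding sum_distrib_right
    by (rule sum.cong) (auto simp: power_add[symmetric] algebra_simps)
  have cp': "(\<lambda>k. (\<Sum>i\<le>k. c i * g (k - i)) * z ^ k) sums (F * G)" using cp eqk by simp
  have sh: "summable (\<lambda>k. g (k + m) * z ^ (k + m))"
    using sg' by (rule summable_ignore_initial_segment)
  have sh': "summable (\<lambda>k. g (k + m) * z ^ k)"
    using summable_mult[OF sh, of "inverse (z ^ m)"] z
    by (simp add: power_add field_simps)
  have "F * G \<le> (\<Sum>k. g (k + m) * z ^ k)"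
    using sums_le[OF _ cp' summable_sums[OF sh']] conv z by (simp add: mult_right_mono)
  also have "(\<Sum>k. g (k + m) * z ^ k) = (\<Sum>k. g (k + m) * z ^ (k + m)) / z ^ m"
    using suminf_mult2[OF sh, of "inverse (z ^ m)"] z
    by (simp add: power_add field_simps)
  also have "(\<Sum>k. g (k + m) * z ^ (k + m)) \<le> G"
  proof -
    have "G = (\<Sum>k. g (k + m) * z ^ (k + m)) + (\<Sum>i<m. g i * z ^ i)"
      unfolding G_def by (rule suminf_split_initial_segment[OF sg'])
    moreover have "0 \<le> (\<Sum>i<m. g i * z ^ i)" using g0 z by (intro sum_nonneg) simp
    ultimately show ?thesis by simp
  qed
  hence "(\<Sum>k. g (k + m) * z ^ (k + m)) / z ^ m \<le> G / z ^ m" using z by (simp add: divide_right_mono)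
  finally have FG: "z ^ m * F * G \<le> G" using z by (simp add: field_simps)
  have Fpos: "0 < F" using big z unfolding F_def
    by (metis mult_eq_0_iff not_less_iff_gr_or_eq zero_less_mult_iff zero_less_one zero_less_power
        less_trans order_less_irrefl)
  have "\<exists>n. 0 < c n * z ^ n"
  proof (rule ccontr)
    assume "\<not> ?thesis"
    hence "\<And>n. c n * z ^ n = 0" using c0 z by (metis linorder_neqE_linordered_idom mult_nonneg_nonneg not_less zero_le_power less_imp_le)
    hence e: "(\<lambda>n. c n * z ^ n) = (\<lambda>_. 0)" by (rule ext)
    have "F = 0" unfolding F_def e by simp
    thus False using Fpos by simp
  qed
  then obtain n where n: "0 < c n * z ^ n" by blast
  have "c n * z ^ n \<le> g n * z ^ n" using cg[of n] z by (simp add: mult_right_mono)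
  also have "\<dots> \<le> G" unfolding G_def
    using sum_le_suminf[OF sg', of "{n}"] g0 z by simp
  finally have Gpos: "0 < G" using n by simp
  have "1 < z ^ m * F" using big unfolding F_def .
  hence "G < z ^ m * F * G" using Gpos by simp
  thus False using FG by simp
qed

lemma fekete_div:
  fixes A :: "nat \<Rightarrow> real"
  assumes A0: "\<And>n. 0 \<le> A n" and sub: "\<And>n k. A (n + k) \<le> A n * A k"
    and s: "0 < s" and sm: "summable (\<lambda>n. A n * s ^ n)"
  shows "\<exists>z > s. summable (\<lambda>n. A n * z ^ n)"
proof -
  have "(\<lambda>n. A n * s ^ n) \<longlonglongrightarrow> 0" using sm by (rule summable_LIMSEQ_zero)
  hence "eventually (\<lambda>n. A n * s ^ n < 1) sequentially" by (rule order_tendstoD) simp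
  then obtain N where N: "\<And>n. n \<ge> N \<Longrightarrow> A n * s ^ n < 1" unfolding eventually_sequentially by blast
  define n0 where "n0 = Suc N"
  have n0: "0 < n0" "A n0 * s ^ n0 < 1" using N[of n0] by (auto simp: n0_def)
  define q where "q = A n0"
  have q0: "0 \<le> q" using A0 by (simp add: q_def)
  have "((\<lambda>y. q * y ^ n0) \<longlongrightarrow> q * s ^ n0) (at_right s)" by (intro tendsto_intros)
  hence "eventually (\<lambda>y. q * y ^ n0 < 1) (at_right s)" by (rule order_tendstoD) (use n0 q_def in simp)
  then obtain b where b: "b > s" "\<And>y. y > s \<Longrightarrow> y < b \<Longrightarrow> q * y ^ n0 < 1"
    unfolding eventually_at_right_field by blast
  define z where "z = (s + b) / 2"
  have z: "s < z" "z < b" "0 < z" using b s by (auto simp: z_def)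
  define \<theta> where "\<theta> = q * z ^ n0"
  have th: "0 \<le> \<theta>" "\<theta> < 1" using b(2)[OF z(1,2)] q0 z by (auto simp: \<theta>_def)
  define \<rho> where "\<rho> = max (root n0 \<theta>) (1/2)"
  have rho: "0 < \<rho>" "\<rho> < 1" using th n0 by (auto simp: \<rho>_def)
  have thr: "\<theta> \<le> \<rho> ^ n0"
  proof -
    have "\<theta> = root n0 \<theta> ^ n0" using th n0 by simp
    also have "\<dots> \<le> \<rho> ^ n0" using th by (intro power_mono) (auto simp: \<rho>_def real_root_ge_zero)
    finally show ?thesis .
  qed
  have iter: "A (k * n0 + j) \<le> q ^ k * A j" for k j
  proof (induction k)
    case 0 then show ?case by simp
  next
    case (Suc k)
    have "A (Suc k * n0 + j) = A (n0 + (k * n0 + j))" by (simp add: algebra_simps)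
    also have "\<dots> \<le> q * A (k * n0 + j)" using sub unfolding q_def .
    also have "\<dots> \<le> q * (q ^ k * A j)" using Suc q0 by (intro mult_left_mono)
    finally show ?case by (simp add: algebra_simps)
  qed
  define M where "M = (\<Sum>j<n0. A j)"
  define Zc where "Zc = (max 1 z) ^ n0"
  have bound: "A n * z ^ n \<le> (M * Zc / \<rho> ^ n0) * \<rho> ^ n" for n
  proof -
    define d where "d = n div n0"
    define j where "j = n mod n0"
    have nd: "n = d * n0 + j" unfolding d_def j_def by simp
    have j: "j < n0" using n0 unfolding j_def by simp
    have Aj: "A j \<le> M" unfolding M_def using j A0 by (intro member_le_sum) auto
    have zj: "z ^ j \<le> Zc"
    proof -
      have "z ^ j \<le> (max 1 z) ^ j" using z by (intro power_mono) auto
      also have "\<dots> \<le> (max 1 z) ^ n0" using j by (intro power_increasing) auto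
      finally show ?thesis unfolding Zc_def .
    qed
    have "A n * z ^ n \<le> (q ^ d * A j) * z ^ n" using iter[of d j] nd z by (simp add: mult_right_mono)
    also have "\<dots> = \<theta> ^ d * A j * z ^ j" unfolding \<theta>_def nd
      by (simp add: power_add power_mult power_mult_distrib mult.commute mult.left_commute flip: power_mult)
    also have "\<dots> \<le> (\<rho> ^ n0) ^ d * M * Zc"
      using thr th Aj zj A0[of j] z
      by (intro mult_mono power_mono) (auto simp: zero_le_mult_iff)
    also have "(\<rho> ^ n0) ^ d = \<rho> ^ (d * n0 + n0) / \<rho> ^ n0"
      using rho by (simp add: power_add power_mult[symmetric] mult.commute[of d n0])
    also have "\<rho> ^ (d * n0 + n0) \<le> \<rho> ^ n"
      using rho nd j by (intro power_decreasing) auto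
    hence "\<rho> ^ (d * n0 + n0) / \<rho> ^ n0 * M * Zc \<le> \<rho> ^ n / \<rho> ^ n0 * M * Zc"
      using rho Aj A0[of j] zj z
      by (intro mult_right_mono divide_right_mono) (auto intro: order_trans[OF _ zj])
    finally show ?thesis by (simp add: field_simps)
  qed
  have "summable (\<lambda>n. (M * Zc / \<rho> ^ n0) * \<rho> ^ n)"
    using rho by (intro summable_mult summable_geometric) simp
  hence "summable (\<lambda>n. A n * z ^ n)"
    by (rule summable_comparison_test') (use bound A0 z in \<open>simp add: abs_mult\<close>)
  thus ?thesis using z by blast
qed

lemma C5:
  assumes cs: "concurrent_system I (\<delta>::'s::finite \<Rightarrow> 'a::finite \<Rightarrow> 's option)"
  shows "card (traces_between I \<delta> A \<alpha> \<beta> (n + k)) \<le>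
     (\<Sum>\<gamma>\<in>UNIV. card (traces_between I \<delta> A \<alpha> \<gamma> n) * card (traces_between I \<delta> A \<gamma> \<beta> k))"
proof -
  define D where "D = (SIGMA \<gamma> : UNIV. traces_between I \<delta> A \<alpha> \<gamma> n \<times> traces_between I \<delta> A \<gamma> \<beta> k)"
  have finD: "finite D" unfolding D_def by (intro finite_SigmaI finite_cartesian_product finite_tb) auto
  have cardD: "card D = (\<Sum>\<gamma>\<in>UNIV. card (traces_between I \<delta> A \<alpha> \<gamma> n) * card (traces_between I \<delta> A \<gamma> \<beta> k))"
    unfolding D_def by (subst card_SigmaI) (auto simp: card_cartesian_product intro!: finite_tb)
  define g where "g X = (the (run \<delta> \<alpha> (take n (rep X))), cls I (take n (rep X)), cls I (drop n (rep X)))" for X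
  have "card (traces_between I \<delta> A \<alpha> \<beta> (n + k)) \<le> card D"
  proof (rule card_inj_on_le[of g])
    show "inj_on g (traces_between I \<delta> A \<alpha> \<beta> (n + k))"
    proof (rule inj_onI)
      fix X Y assume X: "X \<in> traces_between I \<delta> A \<alpha> \<beta> (n + k)" and Y: "Y \<in> traces_between I \<delta> A \<alpha> \<beta> (n + k)"
        and e: "g X = g Y"
      hence "(take n (rep X), take n (rep Y)) \<in> trace_eq I" "(drop n (rep X), drop n (rep Y)) \<in> trace_eq I"
        unfolding g_def using cls_eq_iff by auto
      hence "(take n (rep X) @ drop n (rep X), take n (rep Y) @ drop n (rep Y)) \<in> trace_eq I"
        by (rule teq_append)
      hence "(rep X, rep Y) \<in> trace_eq I" by simp
      thus "X = Y" using rep_props(2)[OF cs X] rep_props(2)[OF cs Y] cls_eq_iff by metis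
    qed
    show "g ` traces_between I \<delta> A \<alpha> \<beta> (n + k) \<subseteq> D"
    proof
      fix Z assume "Z \<in> g ` traces_between I \<delta> A \<alpha> \<beta> (n + k)"
      then obtain X where X: "X \<in> traces_between I \<delta> A \<alpha> \<beta> (n + k)" and Z: "Z = g X" by blast
      have r: "rep X \<in> tS \<delta> A \<alpha> \<beta> (n + k)" using rep_props[OF cs X] by blast
      have run: "run \<delta> \<alpha> (rep X) = Some \<beta>" using r by (simp add: tS_def)
      have "run \<delta> \<alpha> (take n (rep X)) \<noteq> None"
      proof
        assume "run \<delta> \<alpha> (take n (rep X)) = None"
        hence "run \<delta> \<alpha> (take n (rep X) @ drop n (rep X)) = None" by (rule run_None)
        thus False using run by (simp only: append_take_drop_id) simp
      qed
      then obtain \<gamma> where g1: "run \<delta> \<alpha> (take n (rep X)) = Some \<gamma>" by blast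
      have g2: "run \<delta> \<gamma> (drop n (rep X)) = Some \<beta>"
        using run_Some[OF g1, of "drop n (rep X)"] run by (simp only: append_take_drop_id)
      have len: "length (rep X) = n + k" and sA: "set (rep X) \<subseteq> A" using r by (auto simp: tS_def)
      have "take n (rep X) \<in> tS \<delta> A \<alpha> \<gamma> n" using g1 len sA set_take_subset[of n "rep X"]
        unfolding tS_def by auto
      moreover have "drop n (rep X) \<in> tS \<delta> A \<gamma> \<beta> k" using g2 len sA set_drop_subset[of n "rep X"]
        unfolding tS_def by auto
      ultimately show "Z \<in> D" unfolding Z g_def D_def tb_eq using g1 by auto
    qed
  qed fact
  thus ?thesis using cardD by simp
qed

lemma root_pos:
  "ereal (1 / (2 * real (card (UNIV::'a set)))) \<le> root_between I (\<delta> :: 's \<Rightarrow> 'a::finite \<Rightarrow> 's option) A \<alpha> \<beta>"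
proof -
  define K where "K = real (card (UNIV::'a set))"
  have K: "1 \<le> K" unfolding K_def using card_gt_0_iff[of "UNIV::'a set"] by simp
  define z where "z = 1 / (2 * K)"
  have z: "0 < z" using K by (simp add: z_def)
  have cK: "real (card (traces_between I \<delta> A \<alpha> \<beta> n)) \<le> K ^ n" for n
  proof -
    have "card (traces_between I \<delta> A \<alpha> \<beta> n) \<le> card (tS \<delta> A \<alpha> \<beta> n)"
      unfolding tb_eq by (rule card_image_le[OF finite_tS])
    also have "\<dots> \<le> card {w. set w \<subseteq> (UNIV::'a set) \<and> length w = n}"
      by (rule card_mono) (use finite_lists_length_eq[of "UNIV::'a set" n] in \<open>auto simp: tS_def\<close>)
    also have "\<dots> = card (UNIV::'a set) ^ n" by (rule card_lists_length_eq) simp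
    finally have "real (card (traces_between I \<delta> A \<alpha> \<beta> n)) \<le> real (card (UNIV::'a set) ^ n)"
      by (simp only: of_nat_le_iff)
    thus ?thesis unfolding K_def by simp
  qed
  have "summable (\<lambda>n. real (card (traces_between I \<delta> A \<alpha> \<beta> n)) * z ^ n)"
  proof (rule summable_comparison_test'[of "\<lambda>n. (1/2) ^ n"])
    show "summable (\<lambda>n. (1/2::real) ^ n)" by (rule summable_geometric) simp
    fix n
    have "real (card (traces_between I \<delta> A \<alpha> \<beta> n)) * z ^ n \<le> K ^ n * z ^ n"
      using cK z by (intro mult_right_mono) auto
    also have "\<dots> = (K * z) ^ n" by (simp only: power_mult_distrib)
    also have "K * z = 1/2" using K by (simp add: z_def)
    finally have "real (card (traces_between I \<delta> A \<alpha> \<beta> n)) * z ^ n \<le> (1/2) ^ n" .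
    thus "norm (real (card (traces_between I \<delta> A \<alpha> \<beta> n)) * z ^ n) \<le> (1/2) ^ n"
      using z by (simp add: abs_mult)
  qed
  hence "norm z \<le> root_between I \<delta> A \<alpha> \<beta>" unfolding root_between_def by (rule conv_radius_geI)
  thus ?thesis using z by (simp add: z_def K_def)
qed

lemma irr_spectral:
  fixes I :: "('a::finite \<times> 'a) set" and \<delta> :: "'s::finite \<Rightarrow> 'a \<Rightarrow> 's option"
  assumes cs: "concurrent_system I \<delta>" and acc: "accessible \<delta>" and al: "alive \<delta>"
    and im: "irreducible_monoid I"
  shows "spectral_property I \<delta>"
  unfolding spectral_property_def
proof
  fix a :: 'a
  define c where "c \<alpha> \<beta> n = real (card (traces_between I \<delta> (UNIV - {a}) \<alpha> \<beta> n))" for \<alpha> \<beta> n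
  define g where "g \<alpha> \<beta> n = real (card (traces_between I \<delta> UNIV \<alpha> \<beta> n))" for \<alpha> \<beta> n
  have c0: "0 \<le> c \<alpha> \<beta> n" for \<alpha> \<beta> n by (simp add: c_def)
  have rbc: "root_between I \<delta> (UNIV - {a}) \<alpha> \<beta> = conv_radius (c \<alpha> \<beta>)" for \<alpha> \<beta>
    by (simp add: root_between_def c_def)
  have rbg: "root_between I \<delta> UNIV \<alpha> \<beta> = conv_radius (g \<alpha> \<beta>)" for \<alpha> \<beta>
    by (simp add: root_between_def g_def)
  have use_hcore: "root_between I \<delta> UNIV \<alpha> \<beta> \<le> ereal z"
    if u: "UNIV \<subseteq> set u" "run \<delta> \<beta> u = Some \<alpha>" and z: "0 < z"
      and zc: "ereal z < root_between I \<delta> (UNIV - {a}) \<alpha> \<beta>"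
      and big: "1 < z ^ length u * (\<Sum>n. c \<alpha> \<beta> n * z ^ n)" for \<alpha> \<beta> u z
  proof -
    have cg: "c \<alpha> \<beta> n \<le> g \<alpha> \<beta> n" for n unfolding c_def g_def
      by (simp only: of_nat_le_iff, rule card_tb_mono, simp)
    have conv: "(\<Sum>i\<le>N. c \<alpha> \<beta> i * g \<alpha> \<beta> (N - i)) \<le> g \<alpha> \<beta> (N + length u)" for N
    proof -
      have uU: "set u = UNIV" using u(1) by auto
      have "real (\<Sum>i\<le>N. card (traces_between I \<delta> (UNIV - {a}) \<alpha> \<beta> i) * card (traces_between I \<delta> UNIV \<alpha> \<beta> (N - i)))
         \<le> real (card (traces_between I \<delta> UNIV \<alpha> \<beta> (N + length u)))"
        using C4[OF cs im uU u(2), where N=N and a=a] by (simp only: of_nat_le_iff)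
      thus ?thesis unfolding c_def g_def by simp
    qed
    have zc': "ereal z < conv_radius (c \<alpha> \<beta>)" using zc rbc by simp
    show ?thesis unfolding rbg by (rule hcore[OF c0 cg conv z zc' big])
  qed
  have key: "\<exists>\<alpha> \<beta> z. ereal z < char_root I \<delta> (UNIV - {a}) \<and> root_between I \<delta> UNIV \<alpha> \<beta> \<le> ereal z"
  proof (cases "char_root I \<delta> (UNIV - {a}) = \<infinity>")
    case True
    define \<alpha> :: 's where "\<alpha> = undefined"
    obtain u where u: "UNIV \<subseteq> set u" "run \<delta> \<alpha> u = Some \<alpha>"
      using connector[OF acc al, of UNIV \<alpha> \<alpha>] by auto
    have ul: "1 \<le> length u" using u(1) by (cases u) auto
    have zc: "ereal 2 < root_between I \<delta> (UNIV - {a}) \<alpha> \<alpha>"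
      using char_root_le[of I \<delta> "UNIV - {a}" \<alpha> \<alpha>] True by simp
    have sm: "summable (\<lambda>n. c \<alpha> \<alpha> n * 2 ^ n)"
      using zc unfolding rbc by (intro summable_in_conv_radius) simp
    have c00: "1 \<le> c \<alpha> \<alpha> 0"
    proof -
      have "[] \<in> tS \<delta> (UNIV - {a}) \<alpha> \<alpha> 0" by (simp add: tS_def)
      hence "traces_between I \<delta> (UNIV - {a}) \<alpha> \<alpha> 0 \<noteq> {}" unfolding tb_eq by blast
      hence "0 < card (traces_between I \<delta> (UNIV - {a}) \<alpha> \<alpha> 0)"
        using finite_tb[of I \<delta> "UNIV - {a}" \<alpha> \<alpha> 0] by (simp add: card_gt_0_iff)
      thus ?thesis unfolding c_def by simp
    qed
    have "c \<alpha> \<alpha> 0 \<le> (\<Sum>n. c \<alpha> \<alpha> n * 2 ^ n)"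
      using sum_le_suminf[OF sm, of "{0}"] c0 by simp
    hence F1: "1 \<le> (\<Sum>n. c \<alpha> \<alpha> n * 2 ^ n)" using c00 by simp
    have "(2::real) ^ 1 \<le> 2 ^ length u" by (rule power_increasing[OF ul]) simp
    hence l2: "(2::real) \<le> 2 ^ length u" by simp
    have "2 * 1 \<le> (2::real) ^ length u * (\<Sum>n. c \<alpha> \<alpha> n * 2 ^ n)"
      by (rule mult_mono[OF l2 F1]) simp_all
    hence "2 \<le> (2::real) ^ length u * (\<Sum>n. c \<alpha> \<alpha> n * 2 ^ n)" by simp
    hence "1 < (2::real) ^ length u * (\<Sum>n. c \<alpha> \<alpha> n * 2 ^ n)" by simp
    hence "root_between I \<delta> UNIV \<alpha> \<alpha> \<le> ereal 2"
      using use_hcore[OF u _ zc] by simp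
    thus ?thesis using True by (intro exI[of _ \<alpha>] exI[of _ \<alpha>] exI[of _ 2]) simp
  next
    case False
    have nn: "0 \<le> char_root I \<delta> (UNIV - {a})"
      using char_root_attained[of I \<delta> "UNIV - {a}"] conv_radius_nonneg
      unfolding root_between_def by metis
    then obtain s where s: "char_root I \<delta> (UNIV - {a}) = ereal s" using False
      by (cases "char_root I \<delta> (UNIV - {a})") auto
    have "ereal (1 / (2 * real (card (UNIV::'a set)))) \<le> char_root I \<delta> (UNIV - {a})"
      by (rule char_root_geI) (rule root_pos)
    moreover have "0 < real (card (UNIV::'a set))" using card_gt_0_iff[of "UNIV::'a set"] by simp
    ultimately have spos: "0 < s" unfolding s
      by (metis divide_pos_pos ereal_less_eq(3) order_less_le_trans mult_pos_pos zero_less_numeral zero_less_one)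
    obtain \<alpha>0 \<beta>0 where s0: "char_root I \<delta> (UNIV - {a}) = root_between I \<delta> (UNIV - {a}) \<alpha>0 \<beta>0"
      using char_root_attained by blast
    define At where "At n = (\<Sum>\<alpha>\<in>UNIV. \<Sum>\<beta>\<in>UNIV. c \<alpha> \<beta> n)" for n
    have At0: "0 \<le> At n" for n unfolding At_def using c0 by (simp add: sum_nonneg)
    have sub: "At (n + k) \<le> At n * At k" for n k
    proof -
      have "At (n + k) \<le> (\<Sum>\<alpha>\<in>UNIV. \<Sum>\<beta>\<in>UNIV. \<Sum>\<gamma>\<in>UNIV. c \<alpha> \<gamma> n * c \<gamma> \<beta> k)"
        unfolding At_def
      proof (intro sum_mono)
        fix \<alpha> \<beta>
        have "real (card (traces_between I \<delta> (UNIV - {a}) \<alpha> \<beta> (n + k))) \<le>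
          real (\<Sum>\<gamma>\<in>UNIV. card (traces_between I \<delta> (UNIV - {a}) \<alpha> \<gamma> n) * card (traces_between I \<delta> (UNIV - {a}) \<gamma> \<beta> k))"
          using C5[OF cs] by (simp only: of_nat_le_iff)
        thus "c \<alpha> \<beta> (n + k) \<le> (\<Sum>\<gamma>\<in>UNIV. c \<alpha> \<gamma> n * c \<gamma> \<beta> k)" unfolding c_def by simp
      qed
      also have "\<dots> = (\<Sum>\<alpha>\<in>UNIV. \<Sum>\<gamma>\<in>UNIV. \<Sum>\<beta>\<in>UNIV. c \<alpha> \<gamma> n * c \<gamma> \<beta> k)"
        by (rule sum.cong[OF refl], rule sum.swap)
      also have "\<dots> = (\<Sum>\<alpha>\<in>UNIV. \<Sum>\<gamma>\<in>UNIV. c \<alpha> \<gamma> n * (\<Sum>\<beta>\<in>UNIV. c \<gamma> \<beta> k))"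
        by (simp add: sum_distrib_left)
      also have "\<dots> \<le> (\<Sum>\<alpha>\<in>UNIV. \<Sum>\<gamma>\<in>UNIV. c \<alpha> \<gamma> n * At k)"
      proof (intro sum_mono mult_left_mono c0)
        fix \<gamma>
        show "(\<Sum>\<beta>\<in>UNIV. c \<gamma> \<beta> k) \<le> At k" unfolding At_def
          by (rule member_le_sum) (auto intro: sum_nonneg c0)
      qed
      also have "\<dots> = At n * At k" unfolding At_def by (simp add: sum_distrib_right)
      finally show ?thesis .
    qed
    have nsum: "\<not> summable (\<lambda>n. At n * s ^ n)"
    proof
      assume "summable (\<lambda>n. At n * s ^ n)"
      then obtain z where z: "z > s" "summable (\<lambda>n. At n * z ^ n)"
        using fekete_div[OF At0 sub spos] by blast
      have "ereal (norm z) \<le> conv_radius At" by (rule conv_radius_geI[OF z(2)])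
      also have "conv_radius At \<le> conv_radius (c \<alpha>0 \<beta>0)"
      proof (rule cr_mono)
        fix n show "c \<alpha>0 \<beta>0 n \<le> At n" unfolding At_def
          using member_le_sum[of \<alpha>0 UNIV "\<lambda>\<alpha>. \<Sum>\<beta>\<in>UNIV. c \<alpha> \<beta> n"]
                member_le_sum[of \<beta>0 UNIV "\<lambda>\<beta>. c \<alpha>0 \<beta> n"] c0
          by (simp add: sum_nonneg order_trans)
      qed (rule c0)
      also have "\<dots> = ereal s" using s s0 rbc by simp
      finally show False using z spos by simp
    qed
    obtain \<alpha> \<beta> where nsab: "\<not> summable (\<lambda>n. c \<alpha> \<beta> n * s ^ n)"
    proof -
      { assume all: "\<forall>\<alpha> \<beta>. summable (\<lambda>n. c \<alpha> \<beta> n * s ^ n)"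
        have "summable (\<lambda>n. \<Sum>\<alpha>\<in>UNIV. \<Sum>\<beta>\<in>UNIV. c \<alpha> \<beta> n * s ^ n)"
          using all by (intro summable_sum) auto
        hence "summable (\<lambda>n. At n * s ^ n)" unfolding At_def by (simp add: sum_distrib_right)
        hence False using nsum by simp }
      thus ?thesis using that by blast
    qed
    obtain u where u: "UNIV \<subseteq> set u" "run \<delta> \<beta> u = Some \<alpha>"
      using connector[OF acc al, of UNIV \<beta> \<alpha>] by auto
    define m where "m = length u"
    have "\<exists>N. 1 / s ^ m < (\<Sum>n<N. c \<alpha> \<beta> n * s ^ n)"
    proof (rule ccontr)
      assume "\<not> ?thesis"
      hence "\<And>N. (\<Sum>n<N. c \<alpha> \<beta> n * s ^ n) \<le> 1 / s ^ m" by (simp add: not_less)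
      hence "summable (\<lambda>n. c \<alpha> \<beta> n * s ^ n)"
        by (intro summableI_nonneg_bounded) (use c0 spos in auto)
      thus False using nsab by simp
    qed
    then obtain N where N: "1 / s ^ m < (\<Sum>n<N. c \<alpha> \<beta> n * s ^ n)" by blast
    define p where "p y = y ^ m * (\<Sum>n<N. c \<alpha> \<beta> n * y ^ n)" for y :: real
    have ps: "1 < p s" unfolding p_def using N spos by (simp add: field_simps)
    have "(p \<longlongrightarrow> p s) (at_left s)" unfolding p_def by (intro tendsto_intros)
    hence "eventually (\<lambda>y. 1 < p y) (at_left s)" using ps by (rule order_tendstoD)
    then obtain b where b: "b < s" "\<And>y. y > b \<Longrightarrow> y < s \<Longrightarrow> 1 < p y"
      unfolding eventually_at_left_field by blast
    define z where "z = (max b 0 + s) / 2"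
    have z: "b < z" "z < s" "0 < z" using b spos by (auto simp: z_def)
    have zc: "ereal z < root_between I \<delta> (UNIV - {a}) \<alpha> \<beta>"
    proof -
      have "ereal z < ereal s" using z by simp
      thus ?thesis using char_root_le[of I \<delta> "UNIV - {a}" \<alpha> \<beta>] s by (metis order_less_le_trans)
    qed
    have sm: "summable (\<lambda>n. c \<alpha> \<beta> n * z ^ n)"
      using zc z unfolding rbc by (intro summable_in_conv_radius) simp
    have "(\<Sum>n<N. c \<alpha> \<beta> n * z ^ n) \<le> (\<Sum>n. c \<alpha> \<beta> n * z ^ n)"
      using sum_le_suminf[OF sm, of "{..<N}"] c0 z by simp
    hence "p z \<le> z ^ m * (\<Sum>n. c \<alpha> \<beta> n * z ^ n)" unfolding p_def using z by (simp add: mult_left_mono)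
    hence "1 < z ^ length u * (\<Sum>n. c \<alpha> \<beta> n * z ^ n)" using b(2)[OF z(1,2)] unfolding m_def by simp
    hence "root_between I \<delta> UNIV \<alpha> \<beta> \<le> ereal z" using use_hcore[OF u z(3) zc] by simp
    thus ?thesis using z s by (intro exI[of _ \<alpha>] exI[of _ \<beta>] exI[of _ z]) simp
  qed
  then obtain \<alpha> \<beta> z where "ereal z < char_root I \<delta> (UNIV - {a})" "root_between I \<delta> UNIV \<alpha> \<beta> \<le> ereal z"
    by blast
  thus "char_root I \<delta> UNIV < char_root I \<delta> (UNIV - {a})"
    using char_root_le[of I \<delta> UNIV \<alpha> \<beta>] by (meson order_le_less_trans)
qed

theorem theorem1:
  fixes I :: "('a::finite \<times> 'a) set" and \<delta> :: "'s::finite \<Rightarrow> 'a \<Rightarrow> 's option"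
  assumes "concurrent_system I \<delta>"
    and "accessible \<delta>"
  shows "irreducible_system I \<delta> \<longleftrightarrow> spectral_property I \<delta>"
  using irr_spectral[OF assms] spectral_alive[OF assms] spectral_irr_monoid[OF assms(1)] assms(2)
  unfolding irreducible_system_def by blast

end
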